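(* If $D$ is a quaternary near-extremal Hermitian self-dual code of length $24$ and $\alpha$ denotes the number of codewords of weight $8$ in $D$, then $\alpha=9\beta$ for some integer $\beta$ with $1\le\beta\le 253$.
   Context: Let $\mathbb{F}_4=\{0,1,\omega,\omega^2\}$ with $\omega^2=\omega+1$. A quaternary code of length $n$ is a linear subspace of $\mathbb{F}_4^n$; it is Hermitian self-dual if it equals its dual with respect to $\langle x,y\rangle_H=\sum_k x_k y_k^2$. The weight of a vector is the number of nonzero coordinates. A quaternary Hermitian self-dual code of length $24$ is near-extremal if its minimum nonzero weight is $8$. *)

theory Defs
  imports Main
begin

text \<open>The field F4 = {0,1,w,w^2} with w^2 = w + 1, given by explicit operation tables.\<close>

datatype f4 = F0 | F1 | Fw | Fw2

fun f4_add :: "f4 \<Rightarrow> f4 \<Rightarrow> f4" where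
  "f4_add F0 y = y"
| "f4_add x F0 = x"
| "f4_add F1 F1 = F0"
| "f4_add F1 Fw = Fw2"
| "f4_add F1 Fw2 = Fw"
| "f4_add Fw F1 = Fw2"
| "f4_add Fw Fw = F0"
| "f4_add Fw Fw2 = F1"
| "f4_add Fw2 F1 = Fw"
| "f4_add Fw2 Fw = F1"
| "f4_add Fw2 Fw2 = F0"

fun f4_mul :: "f4 \<Rightarrow> f4 \<Rightarrow> f4" where
  "f4_mul F0 y = F0"
| "f4_mul x F0 = F0"
| "f4_mul F1 y = y"
| "f4_mul x F1 = x"
| "f4_mul Fw Fw = Fw2"
| "f4_mul Fw Fw2 = F1"
| "f4_mul Fw2 Fw = F1"
| "f4_mul Fw2 Fw2 = Fw"

definition f4_vecs :: "nat \<Rightarrow> (nat \<Rightarrow> f4) set" where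
  "f4_vecs n = {x. \<forall>i\<ge>n. x i = F0}"

definition vzero :: "nat \<Rightarrow> f4" where
  "vzero = (\<lambda>i. F0)"

definition vadd :: "(nat \<Rightarrow> f4) \<Rightarrow> (nat \<Rightarrow> f4) \<Rightarrow> (nat \<Rightarrow> f4)" where
  "vadd x y = (\<lambda>i. f4_add (x i) (y i))"

definition vsmult :: "f4 \<Rightarrow> (nat \<Rightarrow> f4) \<Rightarrow> (nat \<Rightarrow> f4)" where
  "vsmult a x = (\<lambda>i. f4_mul a (x i))"

definition quaternary_code :: "nat \<Rightarrow> (nat \<Rightarrow> f4) set \<Rightarrow> bool" where
  "quaternary_code n C \<longleftrightarrow> C \<subseteq> f4_vecs n \<and> vzero \<in> C \<and>
     (\<forall>x\<in>C. \<forall>y\<in>C. vadd x y \<in> C) \<and> (\<forall>a. \<forall>x\<in>C. vsmult a x \<in> C)"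

definition herm_ip :: "nat \<Rightarrow> (nat \<Rightarrow> f4) \<Rightarrow> (nat \<Rightarrow> f4) \<Rightarrow> f4" where
  "herm_ip n x y = foldr (\<lambda>k acc. f4_add (f4_mul (x k) (f4_mul (y k) (y k))) acc) [0..<n] F0"

definition herm_dual :: "nat \<Rightarrow> (nat \<Rightarrow> f4) set \<Rightarrow> (nat \<Rightarrow> f4) set" where
  "herm_dual n C = {y \<in> f4_vecs n. \<forall>x\<in>C. herm_ip n x y = F0}"

definition herm_self_dual :: "nat \<Rightarrow> (nat \<Rightarrow> f4) set \<Rightarrow> bool" where
  "herm_self_dual n C \<longleftrightarrow> quaternary_code n C \<and> C = herm_dual n C"

definition wt :: "nat \<Rightarrow> (nat \<Rightarrow> f4) \<Rightarrow> nat" where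
  "wt n x = card {i. i < n \<and> x i \<noteq> F0}"

definition min_weight :: "nat \<Rightarrow> (nat \<Rightarrow> f4) set \<Rightarrow> nat \<Rightarrow> bool" where
  "min_weight n C d \<longleftrightarrow> (\<exists>x\<in>C. x \<noteq> vzero \<and> wt n x = d) \<and>
     (\<forall>x\<in>C. x \<noteq> vzero \<longrightarrow> d \<le> wt n x)"

definition near_extremal_24 :: "(nat \<Rightarrow> f4) set \<Rightarrow> bool" where
  "near_extremal_24 D \<longleftrightarrow> herm_self_dual 24 D \<and> min_weight 24 D 8"

end

theory Submission
  imports Defs "HOL-Library.FuncSet"
begin

lemma bsuc: "0 < n \<Longrightarrow> 0 < k \<Longrightarrow> (n::nat) choose k = n * ((n - 1) choose (k - 1)) div k"
proof -
  assume "0 < n" "0 < k"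
  then obtain n' k' where nk: "n = Suc n'" "k = Suc k'" by (metis gr0_implies_Suc)
  have h: "Suc k' * (Suc n' choose Suc k') = Suc n' * (n' choose k')"
    using Suc_times_binomial_eq[of n' k'] by simp
  have "Suc n' * (n' choose k') div Suc k' = (Suc k' * (Suc n' choose Suc k')) div Suc k'"
    by (simp only: h)
  also have "\<dots> = Suc n' choose Suc k'" by (rule nonzero_mult_div_cancel_left) simp
  finally show ?thesis using nk by simp
qed

lemma all_f4: "(\<forall>x::f4. P x) = (P F0 \<and> P F1 \<and> P Fw \<and> P Fw2)"
  by (metis f4.exhaust)

instantiation f4 :: field
begin
definition zero_f4 where "0 = F0"
definition one_f4 where "1 = F1"
definition plus_f4 where "a + b = f4_add a b"
definition times_f4 where "a * b = f4_mul a b"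
definition uminus_f4 where "- (a::f4) = a"
definition minus_f4 where "a - b = f4_add a b"
definition inverse_f4 where "inverse a = f4_mul a a"
definition divide_f4 where "a div b = f4_mul a (f4_mul b b)"
instance
  apply (standard; ((unfold zero_f4_def one_f4_def plus_f4_def times_f4_def uminus_f4_def minus_f4_def inverse_f4_def divide_f4_def, atomize (full), simp add: all_f4)?))
   apply (simp_all add: zero_f4_def one_f4_def inverse_f4_def)
  done
end


lemma f4_add_self: "(a::f4) + a = 0"
  by (cases a) (simp_all add: plus_f4_def zero_f4_def)
lemma f4_uminus: "- (a::f4) = a" by (simp add: uminus_f4_def)
lemma f4_add_eq0: "((a::f4) + b = 0) = (a = b)"
  by (cases a; cases b) (simp_all add: plus_f4_def zero_f4_def)
lemma f4_sq_add: "((a::f4) + b) * (a + b) = a * a + b * b"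
  by (cases a; cases b) (simp_all add: plus_f4_def times_f4_def)
lemma f4_cube: "(a::f4) * (a * a) = (if a = 0 then 0 else 1)"
  by (cases a) (simp_all add: times_f4_def zero_f4_def one_f4_def)
lemma f4_sqrt: "\<exists>t::f4. t * t = v"
proof (cases v)
  case F0 then show ?thesis by (intro exI[of _ F0]) (simp add: times_f4_def)
next
  case F1 then show ?thesis by (intro exI[of _ F1]) (simp add: times_f4_def)
next
  case Fw then show ?thesis by (intro exI[of _ Fw2]) (simp add: times_f4_def)
next
  case Fw2 then show ?thesis by (intro exI[of _ Fw]) (simp add: times_f4_def)
qed
lemma f4_UNIV: "(UNIV :: f4 set) = {F0, F1, Fw, Fw2}"
proof (rule UNIV_eq_I)
  fix x show "x \<in> {F0, F1, Fw, Fw2}" by (cases x) auto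
qed
lemma f4_card: "card (UNIV :: f4 set) = 4"
  by (simp add: f4_UNIV)
lemma f4_finite[simp]: "finite (A :: f4 set)"
  by (rule finite_subset[OF subset_UNIV]) (simp add: f4_UNIV)
lemma f4_of_nat: "(of_nat n :: f4) = (if even n then 0 else 1)"
  by (induction n) (auto simp: f4_add_self)
lemma f4_add_eq[simp]: "f4_add a b = a + b" by (simp add: plus_f4_def)
lemma f4_mul_eq[simp]: "f4_mul a b = a * b" by (simp add: times_f4_def)
lemma F0_eq[simp]: "F0 = 0" by (simp add: zero_f4_def)
lemma F1_eq[simp]: "F1 = 1" by (simp add: one_f4_def)

lemma vadd_apply[simp]: "vadd x y j = x j + y j" by (simp add: vadd_def)
lemma vsmult_apply[simp]: "vsmult a x j = a * x j" by (simp add: vsmult_def)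
lemma vzero_apply[simp]: "vzero j = 0" by (simp add: vzero_def)
lemma vadd_cancel: "vadd (vadd k a) a = k"
  by (rule ext) (simp add: add.assoc f4_add_self)

definition V :: "nat set \<Rightarrow> (nat \<Rightarrow> f4) set" where
  "V J = {x. \<forall>j. j \<notin> J \<longrightarrow> x j = 0}"
definition ip :: "nat set \<Rightarrow> (nat \<Rightarrow> f4) \<Rightarrow> (nat \<Rightarrow> f4) \<Rightarrow> f4" where
  "ip J x y = (\<Sum>j\<in>J. x j * (y j * y j))"

lemma V_bij: "bij_betw (\<lambda>x. restrict x J) (V J) (PiE J (\<lambda>_. UNIV))"
proof (rule bij_betwI[where g = "\<lambda>f j. if j \<in> J then f j else 0"])
  show "(\<lambda>x. restrict x J) \<in> V J \<rightarrow> PiE J (\<lambda>_. UNIV)" by simp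
  show "(\<lambda>f j. if j \<in> J then f j else 0) \<in> PiE J (\<lambda>_. UNIV) \<rightarrow> V J" by (simp add: V_def)
  show "(\<lambda>j. if j \<in> J then restrict x J j else 0) = x" if "x \<in> V J" for x
  proof (rule ext)
    fix j show "(if j \<in> J then restrict x J j else 0) = x j" using that by (simp add: V_def)
  qed
  show "restrict (\<lambda>j. if j \<in> J then y j else 0) J = y" if y: "y \<in> PiE J (\<lambda>_. UNIV)" for y
  proof (rule ext)
    fix j show "restrict (\<lambda>j. if j \<in> J then y j else 0) J j = y j"
      using PiE_arb[OF y, of j] by (simp add: restrict_def)
  qed
qed

lemma V_finite: "finite J \<Longrightarrow> finite (V J)"
proof -
  assume J: "finite J"
  have "finite (PiE J (\<lambda>_. UNIV :: f4 set))" using J by (intro finite_PiE) simp_all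
  then show ?thesis using bij_betw_finite[OF V_bij[of J]] by simp
qed

lemma V_card: "finite J \<Longrightarrow> card (V J) = 4 ^ card J"
proof -
  assume J: "finite J"
  have "card (V J) = card (PiE J (\<lambda>_. UNIV :: f4 set))" by (rule bij_betw_same_card[OF V_bij])
  also have "\<dots> = (\<Prod>i\<in>J. card (UNIV :: f4 set))" using J by (rule card_PiE)
  also have "\<dots> = 4 ^ card J" by (simp add: f4_card)
  finally show ?thesis .
qed

lemma fiber_card:
  assumes fin: "finite G"
    and cl: "\<And>x y. x \<in> G \<Longrightarrow> y \<in> G \<Longrightarrow> vadd x y \<in> G"
    and hom: "\<And>x y. x \<in> G \<Longrightarrow> y \<in> G \<Longrightarrow> (f (vadd x y) = z) = (f x = f y)"
  shows "card G = card (f ` G) * card {x\<in>G. f x = z}"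
proof -
  let ?K = "{x\<in>G. f x = z}"
  have eq: "card {x\<in>G. f x = w} = card ?K" if w: "w \<in> f ` G" for w
  proof -
    obtain a where a: "a \<in> G" "f a = w" using w by auto
    have "bij_betw (\<lambda>k. vadd k a) ?K {x\<in>G. f x = w}"
    proof (rule bij_betwI[where g = "\<lambda>k. vadd k a"])
      show "(\<lambda>k. vadd k a) \<in> ?K \<rightarrow> {x\<in>G. f x = w}"
      proof
        fix k assume k: "k \<in> ?K"
        have "vadd k a \<in> G" using k a cl by auto
        moreover have "f (vadd k a) = f a"
          using hom[OF \<open>vadd k a \<in> G\<close> a(1)] k by (simp add: vadd_cancel)
        ultimately show "vadd k a \<in> {x\<in>G. f x = w}" using a by simp
      qed
      show "(\<lambda>k. vadd k a) \<in> {x\<in>G. f x = w} \<rightarrow> ?K"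
        using a cl hom by auto
    qed (auto simp: vadd_cancel)
    then show ?thesis by (simp add: bij_betw_same_card)
  qed
  have G: "G = (\<Union>w\<in>f ` G. {x\<in>G. f x = w})" by auto
  have "card (\<Union>w\<in>f ` G. {x\<in>G. f x = w}) = (\<Sum>w\<in>f ` G. card {x\<in>G. f x = w})"
    by (rule card_UN_disjoint) (use fin in auto)
  then have "card G = (\<Sum>w\<in>f ` G. card {x\<in>G. f x = w})" using G by simp
  also have "\<dots> = (\<Sum>w\<in>f ` G. card ?K)" using eq by simp
  finally show ?thesis by simp
qed


lemma ip_add_right: "ip J x (vadd y1 y2) = ip J x y1 + ip J x y2"
proof -
  have "ip J x (vadd y1 y2) = (\<Sum>j\<in>J. x j * (y1 j * y1 j) + x j * (y2 j * y2 j))"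
    unfolding ip_def vadd_apply by (intro sum.cong refl) (subst f4_sq_add, rule distrib_left)
  then show ?thesis by (simp only: sum.distrib ip_def)
qed
lemma ip_add_left: "ip J (vadd x1 x2) y = ip J x1 y + ip J x2 y"
  by (simp add: ip_def distrib_right sum.distrib)
lemma ip_smult_left: "ip J (vsmult c x) y = c * ip J x y"
  by (simp add: ip_def sum_distrib_left mult.assoc)
lemma ip_zero_left: "ip J vzero y = 0"
  by (simp add: ip_def)

lemma double_count:
  assumes "finite A" "finite B"
  shows "(\<Sum>x\<in>A. card {y\<in>B. R x y}) = (\<Sum>y\<in>B. card {x\<in>A. R x y})"
proof -
  have c: "card {y\<in>C. P y} = (\<Sum>y\<in>C. if P y then 1 else 0)" if "finite C" for C and P :: "'c \<Rightarrow> bool"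
    using that by (simp add: sum.inter_filter[symmetric])
  have "(\<Sum>x\<in>A. card {y\<in>B. R x y}) = (\<Sum>x\<in>A. \<Sum>y\<in>B. if R x y then 1 else 0)"
    by (intro sum.cong refl) (rule c[OF assms(2)])
  also have "\<dots> = (\<Sum>y\<in>B. \<Sum>x\<in>A. if R x y then 1 else 0)" by (rule sum.swap)
  also have "\<dots> = (\<Sum>y\<in>B. card {x\<in>A. R x y})" by (intro sum.cong refl) (rule c[OF assms(1), symmetric])
  finally show ?thesis .
qed

lemma V_vadd: "x \<in> V J \<Longrightarrow> y \<in> V J \<Longrightarrow> vadd x y \<in> V J"
  by (simp add: V_def)

lemma dual_card:
  assumes J: "finite J" and WV: "W \<subseteq> V J" and W0: "vzero \<in> W"
    and Wadd: "\<And>x y. x\<in>W \<Longrightarrow> y\<in>W \<Longrightarrow> vadd x y \<in> W"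
    and Wsm: "\<And>a x. x\<in>W \<Longrightarrow> vsmult a x \<in> W"
  shows "card W * card {y\<in>V J. \<forall>x\<in>W. ip J x y = 0} = 4 ^ card J"
proof -
  define P where "P = {y\<in>V J. \<forall>x\<in>W. ip J x y = 0}"
  have finV: "finite (V J)" using J by (rule V_finite)
  have finW: "finite W" using WV finV finite_subset by blast
  have PV: "P \<subseteq> V J" by (auto simp: P_def)
  have finP: "finite P" using PV finV finite_subset by blast
  have h1: "card (V J) = 4 * card {y\<in>V J. ip J x y = 0}" if x: "x \<in> V J" "x \<noteq> vzero" for x
  proof -
    have "card (V J) = card (ip J x ` V J) * card {y\<in>V J. ip J x y = 0}"
      by (rule fiber_card[OF finV V_vadd]) (simp_all add: ip_add_right f4_add_eq0)
    moreover have "ip J x ` V J = UNIV"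
    proof -
      have "v \<in> ip J x ` V J" for v
      proof -
      obtain j where j: "x j \<noteq> 0" using x(2) by (auto simp: fun_eq_iff vzero_def)
      have jJ: "j \<in> J" using j x(1) by (auto simp: V_def)
      obtain t where t: "t * t = v / x j" using f4_sqrt by blast
      define y where "y = (\<lambda>k. if k = j then t else 0)"
      have yV: "y \<in> V J" using jJ by (auto simp: V_def y_def)
      have "ip J x y = (\<Sum>k\<in>J. if k = j then x j * (t * t) else 0)"
        unfolding ip_def by (rule sum.cong) (auto simp: y_def)
      also have "\<dots> = x j * (t * t)" using jJ J by simp
      also have "\<dots> = v" using t j by simp
      finally show "v \<in> ip J x ` V J" using yV by (metis image_eqI)
    qed
    then show ?thesis by blast
    qed
    ultimately show ?thesis by (simp add: f4_card)
  qed
  have h2: "card W = 4 * card {x\<in>W. ip J x y = 0}" if y: "y \<in> V J" "y \<notin> P" for y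
  proof -
    have "card W = card ((\<lambda>x. ip J x y) ` W) * card {x\<in>W. ip J x y = 0}"
      by (rule fiber_card[OF finW Wadd]) (simp_all add: ip_add_left f4_add_eq0)
    moreover have "(\<lambda>x. ip J x y) ` W = UNIV"
    proof -
      have "v \<in> (\<lambda>x. ip J x y) ` W" for v
      proof -
      obtain x0 where x0: "x0 \<in> W" "ip J x0 y \<noteq> 0" using y by (auto simp: P_def)
      have "vsmult (v / ip J x0 y) x0 \<in> W" using x0 Wsm by blast
      moreover have "ip J (vsmult (v / ip J x0 y) x0) y = v"
        using x0 by (simp add: ip_smult_left)
      ultimately show "v \<in> (\<lambda>x. ip J x y) ` W" by (metis image_eqI)
    qed
    then show ?thesis by blast
    qed
    ultimately show ?thesis by (simp add: f4_card)
  qed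
  have h3: "{x\<in>W. ip J x y = 0} = W" if "y \<in> P" for y
    using that by (auto simp: P_def)
  have h4: "{y\<in>V J. ip J vzero y = 0} = V J" by (simp add: ip_zero_left)
  have dc: "(\<Sum>x\<in>W. card {y\<in>V J. ip J x y = 0}) = (\<Sum>y\<in>V J. card {x\<in>W. ip J x y = 0})"
    by (rule double_count[OF finW finV])
  have L: "4 * (\<Sum>x\<in>W. card {y\<in>V J. ip J x y = 0}) = 4 * card (V J) + (card W - 1) * card (V J)"
  proof -
    have "(\<Sum>x\<in>W. card {y\<in>V J. ip J x y = 0}) = card (V J) + (\<Sum>x\<in>W - {vzero}. card {y\<in>V J. ip J x y = 0})"
      using sum.remove[OF finW W0, of "\<lambda>x. card {y\<in>V J. ip J x y = 0}"] h4 by simp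
    moreover have "4 * (\<Sum>x\<in>W - {vzero}. card {y\<in>V J. ip J x y = 0}) = (\<Sum>x\<in>W - {vzero}. card (V J))"
      unfolding sum_distrib_left
      by (rule sum.cong) (use h1 WV in auto)
    moreover have "card (W - {vzero}) = card W - 1" using W0 finW by simp
    ultimately show ?thesis by (simp add: distrib_left)
  qed
  have R: "4 * (\<Sum>y\<in>V J. card {x\<in>W. ip J x y = 0}) = 4 * card P * card W + (card (V J) - card P) * card W"
  proof -
    have "(\<Sum>y\<in>V J. card {x\<in>W. ip J x y = 0}) = (\<Sum>y\<in>P. card {x\<in>W. ip J x y = 0}) + (\<Sum>y\<in>V J - P. card {x\<in>W. ip J x y = 0})"
      using sum.subset_diff[OF PV finV, of "\<lambda>y. card {x\<in>W. ip J x y = 0}"] by (simp add: add.commute)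
    moreover have "(\<Sum>y\<in>P. card {x\<in>W. ip J x y = 0}) = card P * card W"
      using h3 by simp
    moreover have "4 * (\<Sum>y\<in>V J - P. card {x\<in>W. ip J x y = 0}) = (\<Sum>y\<in>V J - P. card W)"
      unfolding sum_distrib_left
      by (rule sum.cong) (use h2 in auto)
    moreover have "card (V J - P) = card (V J) - card P" using PV finP by (simp add: card_Diff_subset)
    ultimately show ?thesis by (simp add: distrib_left)
  qed
  have cW: "card W \<ge> 1" using W0 finW by (metis One_nat_def Suc_leI card_gt_0_iff empty_iff)
  have cP: "card P \<le> card (V J)" using PV finV by (rule card_mono[rotated])
  have eq: "4 * card (V J) + (card W - 1) * card (V J) = 4 * card P * card W + (card (V J) - card P) * card W"
    using L R dc by simp
  have "int (4 * card (V J) + (card W - 1) * card (V J)) = int (4 * card P * card W + (card (V J) - card P) * card W)"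
    using eq by simp
  then have "4 * int (card (V J)) + (int (card W) - 1) * int (card (V J)) = 4 * int (card P) * int (card W) + (int (card (V J)) - int (card P)) * int (card W)"
    using cW cP by (simp add: of_nat_diff)
  then have "int (card W) * int (card P) = int (card (V J))"
    by (simp add: algebra_simps)
  then have "card W * card P = card (V J)" by (metis of_nat_eq_iff of_nat_mult)
  then show ?thesis using V_card[OF J] by (simp add: P_def)
qed

lemma ES:
  assumes DV: "D \<subseteq> V {0..<n}" and D0: "vzero \<in> D"
    and Dadd: "\<And>x y. x\<in>D \<Longrightarrow> y\<in>D \<Longrightarrow> vadd x y \<in> D"
    and Dsm: "\<And>a x. x\<in>D \<Longrightarrow> vsmult a x \<in> D"
    and Ddual: "D = {y\<in>V {0..<n}. \<forall>x\<in>D. ip {0..<n} x y = 0}"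
    and S: "S \<subseteq> {0..<n}"
  shows "4 ^ card S * card {x\<in>D. \<forall>j\<in>S. x j = 0} = card D * card {y\<in>D. \<forall>j. j \<notin> S \<longrightarrow> y j = 0}"
proof -
  define pr where "pr = (\<lambda>(x::nat\<Rightarrow>f4) j. if j \<in> S then x j else 0)"
  define W where "W = pr ` D"
  have finS: "finite S" using S finite_subset by blast
  have finD: "finite D" using finite_subset[OF DV V_finite] by simp
  have WV: "W \<subseteq> V S" by (auto simp: W_def pr_def V_def)
  have W0: "vzero \<in> W" unfolding W_def
    by (rule image_eqI[of _ _ vzero]) (auto simp: pr_def D0 fun_eq_iff)
  have Wadd: "vadd x y \<in> W" if xyW: "x \<in> W" "y \<in> W" for x y
  proof -
    obtain a b where ab: "a \<in> D" "b \<in> D" "x = pr a" "y = pr b" using xyW unfolding W_def by blast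
    have "vadd x y = pr (vadd a b)" using ab by (auto simp: pr_def fun_eq_iff)
    then show ?thesis using ab Dadd by (auto simp: W_def)
  qed
  have Wsm: "vsmult c x \<in> W" if xW: "x \<in> W" for c x
  proof -
    obtain a where a: "a \<in> D" "x = pr a" using xW unfolding W_def by blast
    have "vsmult c x = pr (vsmult c a)" using a by (auto simp: pr_def fun_eq_iff)
    then show ?thesis using a Dsm by (auto simp: W_def)
  qed
  have dc: "card W * card {y\<in>V S. \<forall>x\<in>W. ip S x y = 0} = 4 ^ card S"
    by (rule dual_card[OF finS WV W0 Wadd Wsm])
  have ipeq: "ip S (pr x) y = ip {0..<n} x y" if y: "y \<in> V S" for x y
  proof -
    have "ip S (pr x) y = (\<Sum>j\<in>S. x j * (y j * y j))"
      unfolding ip_def by (rule sum.cong) (auto simp: pr_def)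
    also have "\<dots> = (\<Sum>j\<in>{0..<n}. x j * (y j * y j))"
      by (rule sum.mono_neutral_left) (use S y in \<open>auto simp: V_def\<close>)
    finally show ?thesis by (simp add: ip_def)
  qed
  have VS: "V S \<subseteq> V {0..<n}" using S by (auto simp: V_def)
  have Peq: "{y\<in>V S. \<forall>x\<in>W. ip S x y = 0} = {y\<in>D. \<forall>j. j \<notin> S \<longrightarrow> y j = 0}"
  proof -
    have "{y\<in>V S. \<forall>x\<in>W. ip S x y = 0} = {y\<in>V S. \<forall>x\<in>D. ip {0..<n} x y = 0}"
      using ipeq by (auto simp: W_def)
    also have "\<dots> = {y\<in>V S. y \<in> D}"
    proof -
      have mem: "(y \<in> D) = (y \<in> V {0..<n} \<and> (\<forall>x\<in>D. ip {0..<n} x y = 0))" for y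
        using arg_cong[OF Ddual, of "\<lambda>A. y \<in> A"] by simp
      show ?thesis
      proof (rule set_eqI)
        fix y show "(y \<in> {y\<in>V S. \<forall>x\<in>D. ip {0..<n} x y = 0}) = (y \<in> {y\<in>V S. y \<in> D})"
          using mem[of y] VS by blast
      qed
    qed
    also have "\<dots> = {y\<in>D. \<forall>j. j \<notin> S \<longrightarrow> y j = 0}" by (auto simp: V_def)
    finally show ?thesis .
  qed
  have fc: "card D = card (pr ` D) * card {x\<in>D. pr x = vzero}"
  proof (rule fiber_card[OF finD Dadd])
    fix x y assume "x \<in> D" "y \<in> D"
    show "(pr (vadd x y) = vzero) = (pr x = pr y)"
      by (simp add: pr_def fun_eq_iff vzero_def f4_add_eq0)
  qed
  have Keq: "{x\<in>D. pr x = vzero} = {x\<in>D. \<forall>j\<in>S. x j = 0}"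
    by (auto simp: pr_def fun_eq_iff vzero_def)
  have cD: "card D = card W * card {x\<in>D. \<forall>j\<in>S. x j = 0}" using fc Keq by (simp add: W_def)
  have dc': "card W * card {y\<in>D. \<forall>j. j \<notin> S \<longrightarrow> y j = 0} = 4 ^ card S" using dc Peq by simp
  have "4 ^ card S * card {x\<in>D. \<forall>j\<in>S. x j = 0}
      = card W * card {y\<in>D. \<forall>j. j \<notin> S \<longrightarrow> y j = 0} * card {x\<in>D. \<forall>j\<in>S. x j = 0}"
    using dc' by simp
  also have "\<dots> = card D * card {y\<in>D. \<forall>j. j \<notin> S \<longrightarrow> y j = 0}"
    using cD by (simp add: mult.commute mult.left_commute)
  finally show ?thesis .
qed

lemma foldr_sum: "foldr (\<lambda>k acc. f k + acc) xs (0::f4) = sum_list (map f xs)"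
  by (induction xs) simp_all

lemma herm_ip_eq: "herm_ip n x y = ip {0..<n} x y"
proof -
  have "herm_ip n x y = foldr (\<lambda>k acc. x k * (y k * y k) + acc) [0..<n] 0"
    by (simp add: herm_ip_def)
  also have "\<dots> = sum_list (map (\<lambda>k. x k * (y k * y k)) [0..<n])" by (rule foldr_sum)
  also have "\<dots> = ip {0..<n} x y"
    unfolding ip_def by (metis set_upt sum_set_upt_conv_sum_list_nat)
  finally show ?thesis .
qed

lemma vecs_eq: "f4_vecs n = V {0..<n}"
  by (auto simp: f4_vecs_def V_def)

lemma count_sets:
  assumes B: "finite B"
  shows "card {S. A \<subseteq> S \<and> S \<subseteq> B \<and> card S = k} =
     (if A \<subseteq> B \<and> card A \<le> k then (card B - card A) choose (k - card A) else 0)"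
proof (cases "A \<subseteq> B \<and> card A \<le> k")
  case True
  then have AB: "A \<subseteq> B" and Ak: "card A \<le> k" by auto
  have finA: "finite A" using AB B finite_subset by blast
  have "bij_betw (\<lambda>S. S - A) {S. A \<subseteq> S \<and> S \<subseteq> B \<and> card S = k} {T. T \<subseteq> B - A \<and> card T = k - card A}"
  proof (rule bij_betwI[where g = "\<lambda>T. T \<union> A"])
    show "(\<lambda>S. S - A) \<in> {S. A \<subseteq> S \<and> S \<subseteq> B \<and> card S = k} \<rightarrow> {T. T \<subseteq> B - A \<and> card T = k - card A}"
    proof
      fix S assume S: "S \<in> {S. A \<subseteq> S \<and> S \<subseteq> B \<and> card S = k}"
      then have "finite S" using B finite_subset by blast
      then show "S - A \<in> {T. T \<subseteq> B - A \<and> card T = k - card A}"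
        using S finA by (auto simp: card_Diff_subset)
    qed
    show "(\<lambda>T. T \<union> A) \<in> {T. T \<subseteq> B - A \<and> card T = k - card A} \<rightarrow> {S. A \<subseteq> S \<and> S \<subseteq> B \<and> card S = k}"
    proof
      fix T assume T: "T \<in> {T. T \<subseteq> B - A \<and> card T = k - card A}"
      then have "finite T" using B finite_subset by blast
      moreover have "T \<inter> A = {}" using T by auto
      ultimately have "card (T \<union> A) = card T + card A" using finA by (simp add: card_Un_disjoint)
      then show "T \<union> A \<in> {S. A \<subseteq> S \<and> S \<subseteq> B \<and> card S = k}"
        using T AB Ak by auto
    qed
  qed auto
  then have "card {S. A \<subseteq> S \<and> S \<subseteq> B \<and> card S = k} = card {T. T \<subseteq> B - A \<and> card T = k - card A}"
    by (rule bij_betw_same_card)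
  also have "\<dots> = card (B - A) choose (k - card A)"
    using B by (simp add: n_subsets)
  also have "card (B - A) = card B - card A" using AB finA by (simp add: card_Diff_subset)
  finally show ?thesis using True by simp
next
  case False
  have "{S. A \<subseteq> S \<and> S \<subseteq> B \<and> card S = k} = {}"
  proof (rule ccontr)
    assume "{S. A \<subseteq> S \<and> S \<subseteq> B \<and> card S = k} \<noteq> {}"
    then obtain S where S: "A \<subseteq> S" "S \<subseteq> B" "card S = k" by blast
    have "finite S" using S B finite_subset by blast
    then have "card A \<le> k" using S card_mono by blast
    then show False using False S by blast
  qed
  then show ?thesis unfolding if_not_P[OF False] by (simp only: card.empty)
qed


abbreviation "I24 \<equiv> {0..<24::nat}"

lemma ne_code: "near_extremal_24 D \<Longrightarrow> quaternary_code 24 D"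
  by (simp add: near_extremal_24_def herm_self_dual_def)
lemma ne_DV: "near_extremal_24 D \<Longrightarrow> D \<subseteq> V I24"
  using ne_code by (simp add: quaternary_code_def vecs_eq)
lemma ne_D0: "near_extremal_24 D \<Longrightarrow> vzero \<in> D"
  using ne_code by (simp add: quaternary_code_def)
lemma ne_Dadd: "near_extremal_24 D \<Longrightarrow> x \<in> D \<Longrightarrow> y \<in> D \<Longrightarrow> vadd x y \<in> D"
  using ne_code by (simp add: quaternary_code_def)
lemma ne_Dsm: "near_extremal_24 D \<Longrightarrow> x \<in> D \<Longrightarrow> vsmult a x \<in> D"
  using ne_code by (simp add: quaternary_code_def)
lemma ne_Ddual: "near_extremal_24 D \<Longrightarrow> D = {y\<in>V I24. \<forall>x\<in>D. ip I24 x y = 0}"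
proof -
  assume ne: "near_extremal_24 D"
  have h: "D = herm_dual 24 D" using ne by (simp add: near_extremal_24_def herm_self_dual_def)
  have "herm_dual 24 D = {y\<in>V I24. \<forall>x\<in>D. ip I24 x y = 0}"
    by (simp add: herm_dual_def vecs_eq herm_ip_eq)
  then show ?thesis using h by simp
qed
lemma ne_minw: "near_extremal_24 D \<Longrightarrow> x \<in> D \<Longrightarrow> x \<noteq> vzero \<Longrightarrow> 8 \<le> wt 24 x"
  by (simp add: near_extremal_24_def min_weight_def)
lemma ne_ex: "near_extremal_24 D \<Longrightarrow> \<exists>x\<in>D. x \<noteq> vzero \<and> wt 24 x = 8"
  by (simp add: near_extremal_24_def min_weight_def)
lemma ne_finite: "near_extremal_24 D \<Longrightarrow> finite D"
  using finite_subset[OF ne_DV V_finite] by simp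

lemma ne_ES:
  assumes ne: "near_extremal_24 D" and S: "S \<subseteq> I24"
  shows "4 ^ card S * card {x\<in>D. \<forall>j\<in>S. x j = 0} = card D * card {y\<in>D. \<forall>j. j \<notin> S \<longrightarrow> y j = 0}"
  by (rule ES[OF ne_DV[OF ne] ne_D0[OF ne] ne_Dadd[OF ne] ne_Dsm[OF ne] ne_Ddual[OF ne] S])

lemma ne_card: assumes ne: "near_extremal_24 D" shows "card D = 4 ^ 12"
proof -
  have e: "4 ^ card I24 * card {x\<in>D. \<forall>j\<in>I24. x j = 0} = card D * card {y\<in>D. \<forall>j. j \<notin> I24 \<longrightarrow> y j = 0}"
    by (rule ne_ES[OF ne]) simp
  have z: "{x\<in>D. \<forall>j\<in>I24. x j = 0} = {vzero}"
  proof -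
    have "x = vzero" if xD: "x \<in> D" and z0: "\<forall>j\<in>I24. x j = 0" for x
    proof (rule ext)
      fix j have xV: "x \<in> V I24" using xD ne_DV[OF ne] by blast
      show "x j = vzero j" using xV z0 by (cases "j < 24") (auto simp: V_def)
    qed
    then show ?thesis using ne_D0[OF ne] by auto
  qed
  have a: "{y\<in>D. \<forall>j. j \<notin> I24 \<longrightarrow> y j = 0} = D"
    using ne_DV[OF ne] by (auto simp: V_def)
  have "card D ^ 2 = (4 ^ 12) ^ 2" using e z a by (simp add: power2_eq_square)
  from power_eq_imp_eq_base[OF this] show ?thesis by simp
qed

lemma fam:
  assumes ne: "near_extremal_24 D"
  shows "4 ^ k * (\<Sum>x\<in>D. card {S. A \<subseteq> S \<and> S \<subseteq> I24 \<inter> {j. x j = 0} \<and> card S = k})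
       = 4 ^ 12 * (\<Sum>y\<in>D. card {S. A \<union> {j. y j \<noteq> 0} \<subseteq> S \<and> S \<subseteq> I24 \<and> card S = k})"
proof -
  define F where "F = {S. A \<subseteq> S \<and> S \<subseteq> I24 \<and> card S = k}"
  have finF: "finite F" unfolding F_def
    by (rule finite_subset[of _ "Pow I24"]) auto
  have finD: "finite D" by (rule ne_finite[OF ne])
  have "(\<Sum>S\<in>F. 4 ^ k * card {x\<in>D. \<forall>j\<in>S. x j = 0}) = (\<Sum>S\<in>F. 4 ^ 12 * card {y\<in>D. \<forall>j. j \<notin> S \<longrightarrow> y j = 0})"
  proof (rule sum.cong[OF refl])
    fix S assume "S \<in> F"
    then have S: "S \<subseteq> I24" "card S = k" by (auto simp: F_def)
    show "4 ^ k * card {x\<in>D. \<forall>j\<in>S. x j = 0} = 4 ^ 12 * card {y\<in>D. \<forall>j. j \<notin> S \<longrightarrow> y j = 0}"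
      using ne_ES[OF ne S(1)] S(2) ne_card[OF ne] by simp
  qed
  then have e: "4 ^ k * (\<Sum>S\<in>F. card {x\<in>D. \<forall>j\<in>S. x j = 0}) = 4 ^ 12 * (\<Sum>S\<in>F. card {y\<in>D. \<forall>j. j \<notin> S \<longrightarrow> y j = 0})"
    by (simp add: sum_distrib_left)
  have l: "(\<Sum>S\<in>F. card {x\<in>D. \<forall>j\<in>S. x j = 0}) = (\<Sum>x\<in>D. card {S. A \<subseteq> S \<and> S \<subseteq> I24 \<inter> {j. x j = 0} \<and> card S = k})"
  proof -
    have "(\<Sum>S\<in>F. card {x\<in>D. \<forall>j\<in>S. x j = 0}) = (\<Sum>x\<in>D. card {S\<in>F. \<forall>j\<in>S. x j = 0})"
      by (rule double_count[OF finF finD])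
    also have "\<dots> = (\<Sum>x\<in>D. card {S. A \<subseteq> S \<and> S \<subseteq> I24 \<inter> {j. x j = 0} \<and> card S = k})"
      by (intro sum.cong refl arg_cong[where f = card]) (auto simp: F_def)
    finally show ?thesis .
  qed
  have r: "(\<Sum>S\<in>F. card {y\<in>D. \<forall>j. j \<notin> S \<longrightarrow> y j = 0}) = (\<Sum>y\<in>D. card {S. A \<union> {j. y j \<noteq> 0} \<subseteq> S \<and> S \<subseteq> I24 \<and> card S = k})"
  proof -
    have "(\<Sum>S\<in>F. card {y\<in>D. \<forall>j. j \<notin> S \<longrightarrow> y j = 0}) = (\<Sum>y\<in>D. card {S\<in>F. \<forall>j. j \<notin> S \<longrightarrow> y j = 0})"
      by (rule double_count[OF finF finD])
    also have "\<dots> = (\<Sum>y\<in>D. card {S. A \<union> {j. y j \<noteq> 0} \<subseteq> S \<and> S \<subseteq> I24 \<and> card S = k})"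
      by (intro sum.cong refl arg_cong[where f = card]) (auto simp: F_def)
    finally show ?thesis .
  qed
  show ?thesis using e l r by simp
qed

lemma supp_eq: "x \<in> V I24 \<Longrightarrow> {j. x j \<noteq> 0} = {i. i < 24 \<and> x i \<noteq> 0}"
  by (auto simp: V_def)
lemma card_supp: "x \<in> V I24 \<Longrightarrow> card {j. x j \<noteq> 0} = wt 24 x"
  by (simp add: supp_eq wt_def)
lemma wt_le: "wt 24 x \<le> 24"
proof -
  have "wt 24 x \<le> card I24" unfolding wt_def by (rule card_mono) auto
  then show ?thesis by simp
qed
lemma zeros_card: "card (I24 \<inter> {j. x j = 0}) = 24 - wt 24 x"
proof -
  have u: "I24 = (I24 \<inter> {j. x j = 0}) \<union> {i. i < 24 \<and> x i \<noteq> 0}" by auto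
  have "card I24 = card (I24 \<inter> {j. x j = 0}) + card {i. i < 24 \<and> x i \<noteq> 0}"
    by (subst u, rule card_Un_disjoint) auto
  then show ?thesis by (simp add: wt_def)
qed
lemma wt0: "x \<in> V I24 \<Longrightarrow> (wt 24 x = 0) = (x = vzero)"
proof -
  assume xV: "x \<in> V I24"
  have "(wt 24 x = 0) = ({i. i < 24 \<and> x i \<noteq> 0} = {})" unfolding wt_def F0_eq by (rule card_0_eq) simp
  also have "\<dots> = (x = vzero)"
  proof
    assume e: "{i. i < 24 \<and> x i \<noteq> 0} = {}"
    show "x = vzero"
    proof (rule ext)
      fix j show "x j = vzero j" using e xV by (cases "j < 24") (auto simp: V_def)
    qed
  qed simp
  finally show ?thesis .
qed

lemma ip_self: "ip I24 x x = of_nat (wt 24 x)"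
proof -
  have "ip I24 x x = (\<Sum>j\<in>I24. if x j \<noteq> 0 then 1 else 0)"
    unfolding ip_def by (intro sum.cong refl) (simp add: f4_cube)
  also have "\<dots> = (\<Sum>j\<in>{j\<in>I24. x j \<noteq> 0}. 1)"
    by (rule sum.inter_filter[symmetric]) simp
  also have "\<dots> = of_nat (card {j\<in>I24. x j \<noteq> 0})" by simp
  also have "{j\<in>I24. x j \<noteq> 0} = {i. i < 24 \<and> x i \<noteq> 0}" by auto
  finally show ?thesis by (simp add: wt_def)
qed

lemma ne_even: assumes ne: "near_extremal_24 D" and x: "x \<in> D" shows "even (wt 24 x)"
proof -
  have "x \<in> {y\<in>V I24. \<forall>x\<in>D. ip I24 x y = 0}" using x ne_Ddual[OF ne] by simp
  then have "ip I24 x x = 0" using x by simp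
  then have "(of_nat (wt 24 x) :: f4) = 0" by (simp add: ip_self)
  then show ?thesis by (simp add: f4_of_nat split: if_splits)
qed

definition Bc where "Bc D w = card {x\<in>D. wt 24 x = w \<and> x 0 = 0}"
definition Cc where "Cc D w = card {x\<in>D. wt 24 x = w \<and> x 0 \<noteq> 0}"

lemma grouping:
  assumes fin: "finite D"
  shows "(\<Sum>x\<in>D. g (wt 24 x) (x 0 = 0)) = (\<Sum>w\<le>24. Bc D w * g w True + Cc D w * g w False)"
proof -
  have "(\<Sum>x\<in>D. g (wt 24 x) (x 0 = 0)) = (\<Sum>w\<le>24. \<Sum>x\<in>{x\<in>D. wt 24 x = w}. g (wt 24 x) (x 0 = 0))"
    by (rule sum.group[symmetric]) (use fin wt_le in auto)
  also have "\<dots> = (\<Sum>w\<le>24. Bc D w * g w True + Cc D w * g w False)"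
  proof (rule sum.cong[OF refl])
    fix w
    have u: "{x\<in>D. wt 24 x = w} = {x\<in>D. wt 24 x = w \<and> x 0 = 0} \<union> {x\<in>D. wt 24 x = w \<and> x 0 \<noteq> 0}" by auto
    have "(\<Sum>x\<in>{x\<in>D. wt 24 x = w}. g (wt 24 x) (x 0 = 0))
        = (\<Sum>x\<in>{x\<in>D. wt 24 x = w \<and> x 0 = 0}. g (wt 24 x) (x 0 = 0)) + (\<Sum>x\<in>{x\<in>D. wt 24 x = w \<and> x 0 \<noteq> 0}. g (wt 24 x) (x 0 = 0))"
      by (subst u, rule sum.union_disjoint) (use fin in auto)
    also have "\<dots> = (\<Sum>x\<in>{x\<in>D. wt 24 x = w \<and> x 0 = 0}. g w True) + (\<Sum>x\<in>{x\<in>D. wt 24 x = w \<and> x 0 \<noteq> 0}. g w False)"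
      by (intro arg_cong2[where f = "(+)"] sum.cong refl) auto
    also have "\<dots> = Bc D w * g w True + Cc D w * g w False" by (simp add: Bc_def Cc_def)
    finally show "(\<Sum>x\<in>{x\<in>D. wt 24 x = w}. g (wt 24 x) (x 0 = 0)) = Bc D w * g w True + Cc D w * g w False" .
  qed
  finally show ?thesis .
qed

definition gU1 :: "nat \<Rightarrow> nat \<Rightarrow> bool \<Rightarrow> nat" where "gU1 k w b = (24 - w) choose k"
definition gU2 :: "nat \<Rightarrow> nat \<Rightarrow> bool \<Rightarrow> nat" where "gU2 k w b = (if w \<le> k then (24 - w) choose (k - w) else 0)"
definition gP1 :: "nat \<Rightarrow> nat \<Rightarrow> bool \<Rightarrow> nat" where "gP1 s w b = (if b then (23 - w) choose s else 0)"
definition gP2 :: "nat \<Rightarrow> nat \<Rightarrow> bool \<Rightarrow> nat" where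
  "gP2 s w b = (if (if b then w + 1 else w) \<le> s + 1 then (24 - (if b then w + 1 else w)) choose (s + 1 - (if b then w + 1 else w)) else 0)"

lemma U_eq:
  assumes ne: "near_extremal_24 D"
  shows "4 ^ k * (\<Sum>w\<le>24. Bc D w * gU1 k w True + Cc D w * gU1 k w False)
       = 4 ^ 12 * (\<Sum>w\<le>24. Bc D w * gU2 k w True + Cc D w * gU2 k w False)"
proof -
  have fin: "finite D" by (rule ne_finite[OF ne])
  have l: "card {S. {} \<subseteq> S \<and> S \<subseteq> I24 \<inter> {j. x j = 0} \<and> card S = k} = gU1 k (wt 24 x) (x 0 = 0)" for x
    by (subst count_sets) (simp_all add: gU1_def zeros_card)
  have r: "card {S. {} \<union> {j. y j \<noteq> 0} \<subseteq> S \<and> S \<subseteq> I24 \<and> card S = k} = gU2 k (wt 24 y) (y 0 = 0)" if "y \<in> D" for y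
  proof -
    have yV: "y \<in> V I24" using that ne_DV[OF ne] by blast
    have sub: "{j. y j \<noteq> 0} \<subseteq> I24" using yV by (auto simp: V_def)
    show ?thesis by (subst count_sets) (simp_all add: gU2_def sub card_supp[OF yV])
  qed
  have "4 ^ k * (\<Sum>x\<in>D. gU1 k (wt 24 x) (x 0 = 0)) = 4 ^ 12 * (\<Sum>y\<in>D. gU2 k (wt 24 y) (y 0 = 0))"
    using fam[OF ne, of k "{}"] l r by simp
  then show ?thesis by (simp add: grouping[OF fin])
qed

lemma P_eq:
  assumes ne: "near_extremal_24 D"
  shows "4 ^ (s + 1) * (\<Sum>w\<le>24. Bc D w * gP1 s w True + Cc D w * gP1 s w False)
       = 4 ^ 12 * (\<Sum>w\<le>24. Bc D w * gP2 s w True + Cc D w * gP2 s w False)"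
proof -
  have fin: "finite D" by (rule ne_finite[OF ne])
  have l: "card {S. {0} \<subseteq> S \<and> S \<subseteq> I24 \<inter> {j. x j = 0} \<and> card S = s + 1} = gP1 s (wt 24 x) (x 0 = 0)" for x
    by (subst count_sets) (simp_all add: gP1_def zeros_card)
  have r: "card {S. {0} \<union> {j. y j \<noteq> 0} \<subseteq> S \<and> S \<subseteq> I24 \<and> card S = s + 1} = gP2 s (wt 24 y) (y 0 = 0)" if "y \<in> D" for y
  proof -
    have yV: "y \<in> V I24" using that ne_DV[OF ne] by blast
    have sub: "{0} \<union> {j. y j \<noteq> 0} \<subseteq> I24" using yV by (auto simp: V_def)
    have sub1: "{j. y j \<noteq> 0} \<subseteq> I24" using yV by (auto simp: V_def)
    have c: "card (insert 0 {j. y j \<noteq> 0}) = (if y 0 = 0 then wt 24 y + 1 else wt 24 y)"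
    proof (cases "y 0 = 0")
      case True
      have "card (insert 0 {j. y j \<noteq> 0}) = Suc (card {j. y j \<noteq> 0})"
        by (rule card_insert_disjoint) (use sub True in \<open>auto intro: finite_subset\<close>)
      then show ?thesis using True card_supp[OF yV] by simp
    next
      case False
      then have "insert 0 {j. y j \<noteq> 0} = {j. y j \<noteq> 0}" by auto
      then show ?thesis using False card_supp[OF yV] by simp
    qed
    show ?thesis by (subst count_sets) (simp_all add: gP2_def sub sub1 c)
  qed
  have "4 ^ (s + 1) * (\<Sum>x\<in>D. gP1 s (wt 24 x) (x 0 = 0)) = 4 ^ 12 * (\<Sum>y\<in>D. gP2 s (wt 24 y) (y 0 = 0))"
    using fam[OF ne, of "s + 1" "{0}"] l r by simp
  then show ?thesis by (simp add: grouping[OF fin])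
qed

lemma wt_vzero: "wt 24 vzero = 0"
  by (simp add: wt_def)

lemma ne_wt_cases: assumes ne: "near_extremal_24 D" and x: "x \<in> D"
  shows "wt 24 x = 0 \<or> (8 \<le> wt 24 x \<and> even (wt 24 x))"
proof (cases "x = vzero")
  case True then show ?thesis by (simp add: wt_vzero)
next
  case False
  then show ?thesis using ne_minw[OF ne x False] ne_even[OF ne x] by simp
qed

lemma BC_zero: assumes ne: "near_extremal_24 D" and w: "w \<noteq> 0" "w < 8 \<or> odd w"
  shows "Bc D w = 0"
proof -
  have "{x\<in>D. wt 24 x = w \<and> x 0 = 0} = {}"
  proof (rule equals0I)
    fix x assume "x \<in> {x\<in>D. wt 24 x = w \<and> x 0 = 0}"
    then have x: "x \<in> D" "wt 24 x = w" by auto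
    show False using ne_wt_cases[OF ne x(1)] x(2) w by auto
  qed
  then show ?thesis unfolding Bc_def by (simp only: card.empty)
qed

lemma CC_zero: assumes ne: "near_extremal_24 D" and w: "w \<noteq> 0" "w < 8 \<or> odd w"
  shows "Cc D w = 0"
proof -
  have "{x\<in>D. wt 24 x = w \<and> x 0 \<noteq> 0} = {}"
  proof (rule equals0I)
    fix x assume "x \<in> {x\<in>D. wt 24 x = w \<and> x 0 \<noteq> 0}"
    then have x: "x \<in> D" "wt 24 x = w" by auto
    show False using ne_wt_cases[OF ne x(1)] x(2) w by auto
  qed
  then show ?thesis unfolding Cc_def by (simp only: card.empty)
qed

lemma Bc0: assumes ne: "near_extremal_24 D" shows "Bc D 0 = 1"
proof -
  have e: "{x\<in>D. wt 24 x = 0 \<and> x 0 = 0} = {vzero}"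
  proof
    show "{x\<in>D. wt 24 x = 0 \<and> x 0 = 0} \<subseteq> {vzero}"
    proof
      fix x assume "x \<in> {x\<in>D. wt 24 x = 0 \<and> x 0 = 0}"
      then have x: "x \<in> D" "wt 24 x = 0" by auto
      have "x \<in> V I24" using x(1) ne_DV[OF ne] by blast
      then show "x \<in> {vzero}" using x(2) wt0 by blast
    qed
    show "{vzero} \<subseteq> {x\<in>D. wt 24 x = 0 \<and> x 0 = 0}"
      using ne_D0[OF ne] wt_vzero by simp
  qed
  show ?thesis unfolding Bc_def e by simp
qed

lemma Cc0: assumes ne: "near_extremal_24 D" shows "Cc D 0 = 0"
proof -
  have e: "{x\<in>D. wt 24 x = 0 \<and> x 0 \<noteq> 0} = {}"
  proof (rule equals0I)
    fix x assume "x \<in> {x\<in>D. wt 24 x = 0 \<and> x 0 \<noteq> 0}"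
    then have x: "x \<in> D" "wt 24 x = 0" "x 0 \<noteq> 0" by auto
    have "x \<in> V I24" using x(1) ne_DV[OF ne] by blast
    then have "x = vzero" using x(2) wt0 by blast
    then show False using x(3) by simp
  qed
  show ?thesis unfolding Cc_def e by simp
qed

lemma Bc24: assumes ne: "near_extremal_24 D" shows "Bc D 24 = 0"
proof -
  have e: "{x\<in>D. wt 24 x = 24 \<and> x 0 = 0} = {}"
  proof (rule equals0I)
    fix x assume "x \<in> {x\<in>D. wt 24 x = 24 \<and> x 0 = 0}"
    then have x: "wt 24 x = 24" "x 0 = 0" by auto
    have "{i. i < 24 \<and> x i \<noteq> 0} = I24"
    proof (rule card_subset_eq)
      show "finite I24" by simp
      show "{i. i < 24 \<and> x i \<noteq> 0} \<subseteq> I24" by auto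
      show "card {i. i < 24 \<and> x i \<noteq> 0} = card I24" using x(1) by (simp add: wt_def)
    qed
    then have "(0::nat) \<in> {i. i < 24 \<and> x i \<noteq> 0}" by simp
    then show False using x(2) by simp
  qed
  show ?thesis unfolding Bc_def e by simp
qed

lemma sumBC: assumes ne: "near_extremal_24 D"
  shows "(\<Sum>w\<le>24. Bc D w * f w + Cc D w * g w) = (Bc D 0 * f 0 + Cc D 0 * g 0) + (Bc D 8 * f 8 + Cc D 8 * g 8) + (Bc D 10 * f 10 + Cc D 10 * g 10) + (Bc D 12 * f 12 + Cc D 12 * g 12) + (Bc D 14 * f 14 + Cc D 14 * g 14) + (Bc D 16 * f 16 + Cc D 16 * g 16) + (Bc D 18 * f 18 + Cc D 18 * g 18) + (Bc D 20 * f 20 + Cc D 20 * g 20) + (Bc D 22 * f 22 + Cc D 22 * g 22) + (Bc D 24 * f 24 + Cc D 24 * g 24)"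
  by (simp add: atMost_nat_numeral BC_zero[OF ne] CC_zero[OF ne])
lemma P0: assumes ne: "near_extremal_24 D"
  shows "4 * (1 + 1 * Bc D 8 + 1 * Bc D 10 + 1 * Bc D 12 + 1 * Bc D 14 + 1 * Bc D 16 + 1 * Bc D 18 + 1 * Bc D 20 + 1 * Bc D 22) = 16777216 * (1)"
  using P_eq[OF ne, of 0, unfolded sumBC[OF ne]] by (simp add: binomial_eq_0 sumBC[OF ne] Bc0[OF ne] Cc0[OF ne] Bc24[OF ne] gP1_def gP2_def bsuc)

lemma P1: assumes ne: "near_extremal_24 D"
  shows "16 * (23 + 15 * Bc D 8 + 13 * Bc D 10 + 11 * Bc D 12 + 9 * Bc D 14 + 7 * Bc D 16 + 5 * Bc D 18 + 3 * Bc D 20 + 1 * Bc D 22) = 16777216 * (23)"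
  using P_eq[OF ne, of 1, unfolded sumBC[OF ne]] by (simp add: binomial_eq_0 sumBC[OF ne] Bc0[OF ne] Cc0[OF ne] Bc24[OF ne] gP1_def gP2_def bsuc)

lemma P2: assumes ne: "near_extremal_24 D"
  shows "64 * (253 + 105 * Bc D 8 + 78 * Bc D 10 + 55 * Bc D 12 + 36 * Bc D 14 + 21 * Bc D 16 + 10 * Bc D 18 + 3 * Bc D 20) = 16777216 * (253)"
  using P_eq[OF ne, of 2, unfolded sumBC[OF ne]] by (simp add: binomial_eq_0 sumBC[OF ne] Bc0[OF ne] Cc0[OF ne] Bc24[OF ne] gP1_def gP2_def bsuc)

lemma P3: assumes ne: "near_extremal_24 D"
  shows "256 * (1771 + 455 * Bc D 8 + 286 * Bc D 10 + 165 * Bc D 12 + 84 * Bc D 14 + 35 * Bc D 16 + 10 * Bc D 18 + 1 * Bc D 20) = 16777216 * (1771)"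
  using P_eq[OF ne, of 3, unfolded sumBC[OF ne]] by (simp add: binomial_eq_0 sumBC[OF ne] Bc0[OF ne] Cc0[OF ne] Bc24[OF ne] gP1_def gP2_def bsuc)

lemma P4: assumes ne: "near_extremal_24 D"
  shows "1024 * (8855 + 1365 * Bc D 8 + 715 * Bc D 10 + 330 * Bc D 12 + 126 * Bc D 14 + 35 * Bc D 16 + 5 * Bc D 18) = 16777216 * (8855)"
  using P_eq[OF ne, of 4, unfolded sumBC[OF ne]] by (simp add: binomial_eq_0 sumBC[OF ne] Bc0[OF ne] Cc0[OF ne] Bc24[OF ne] gP1_def gP2_def bsuc)

lemma P5: assumes ne: "near_extremal_24 D"
  shows "4096 * (33649 + 3003 * Bc D 8 + 1287 * Bc D 10 + 462 * Bc D 12 + 126 * Bc D 14 + 21 * Bc D 16 + 1 * Bc D 18) = 16777216 * (33649)"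
  using P_eq[OF ne, of 5, unfolded sumBC[OF ne]] by (simp add: binomial_eq_0 sumBC[OF ne] Bc0[OF ne] Cc0[OF ne] Bc24[OF ne] gP1_def gP2_def bsuc)

lemma P6: assumes ne: "near_extremal_24 D"
  shows "16384 * (100947 + 5005 * Bc D 8 + 1716 * Bc D 10 + 462 * Bc D 12 + 84 * Bc D 14 + 7 * Bc D 16) = 16777216 * (100947)"
  using P_eq[OF ne, of 6, unfolded sumBC[OF ne]] by (simp add: binomial_eq_0 sumBC[OF ne] Bc0[OF ne] Cc0[OF ne] Bc24[OF ne] gP1_def gP2_def bsuc)

lemma P7: assumes ne: "near_extremal_24 D"
  shows "65536 * (245157 + 6435 * Bc D 8 + 1716 * Bc D 10 + 330 * Bc D 12 + 36 * Bc D 14 + 1 * Bc D 16) = 16777216 * (245157 + Cc D 8)"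
  using P_eq[OF ne, of 7, unfolded sumBC[OF ne]] by (simp add: binomial_eq_0 sumBC[OF ne] Bc0[OF ne] Cc0[OF ne] Bc24[OF ne] gP1_def gP2_def bsuc)

lemma U0: assumes ne: "near_extremal_24 D"
  shows "1 * (1 + 1 * (Bc D 8 + Cc D 8) + 1 * (Bc D 10 + Cc D 10) + 1 * (Bc D 12 + Cc D 12) + 1 * (Bc D 14 + Cc D 14) + 1 * (Bc D 16 + Cc D 16) + 1 * (Bc D 18 + Cc D 18) + 1 * (Bc D 20 + Cc D 20) + 1 * (Bc D 22 + Cc D 22) + 1 * (Bc D 24 + Cc D 24)) = 16777216 * 1"
  using U_eq[OF ne, of 0, unfolded sumBC[OF ne]] by (simp add: binomial_eq_0 sumBC[OF ne] Bc0[OF ne] Cc0[OF ne] Bc24[OF ne] gU1_def gU2_def bsuc)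

lemma U1: assumes ne: "near_extremal_24 D"
  shows "4 * (24 + 16 * (Bc D 8 + Cc D 8) + 14 * (Bc D 10 + Cc D 10) + 12 * (Bc D 12 + Cc D 12) + 10 * (Bc D 14 + Cc D 14) + 8 * (Bc D 16 + Cc D 16) + 6 * (Bc D 18 + Cc D 18) + 4 * (Bc D 20 + Cc D 20) + 2 * (Bc D 22 + Cc D 22)) = 16777216 * 24"
  using U_eq[OF ne, of 1, unfolded sumBC[OF ne]] by (simp add: binomial_eq_0 sumBC[OF ne] Bc0[OF ne] Cc0[OF ne] Bc24[OF ne] gU1_def gU2_def bsuc)

lemma U2: assumes ne: "near_extremal_24 D"
  shows "16 * (276 + 120 * (Bc D 8 + Cc D 8) + 91 * (Bc D 10 + Cc D 10) + 66 * (Bc D 12 + Cc D 12) + 45 * (Bc D 14 + Cc D 14) + 28 * (Bc D 16 + Cc D 16) + 15 * (Bc D 18 + Cc D 18) + 6 * (Bc D 20 + Cc D 20) + 1 * (Bc D 22 + Cc D 22)) = 16777216 * 276"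
  using U_eq[OF ne, of 2, unfolded sumBC[OF ne]] by (simp add: binomial_eq_0 sumBC[OF ne] Bc0[OF ne] Cc0[OF ne] Bc24[OF ne] gU1_def gU2_def bsuc)

lemma U3: assumes ne: "near_extremal_24 D"
  shows "64 * (2024 + 560 * (Bc D 8 + Cc D 8) + 364 * (Bc D 10 + Cc D 10) + 220 * (Bc D 12 + Cc D 12) + 120 * (Bc D 14 + Cc D 14) + 56 * (Bc D 16 + Cc D 16) + 20 * (Bc D 18 + Cc D 18) + 4 * (Bc D 20 + Cc D 20)) = 16777216 * 2024"
  using U_eq[OF ne, of 3, unfolded sumBC[OF ne]] by (simp add: binomial_eq_0 sumBC[OF ne] Bc0[OF ne] Cc0[OF ne] Bc24[OF ne] gU1_def gU2_def bsuc)

lemma U4: assumes ne: "near_extremal_24 D"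
  shows "256 * (10626 + 1820 * (Bc D 8 + Cc D 8) + 1001 * (Bc D 10 + Cc D 10) + 495 * (Bc D 12 + Cc D 12) + 210 * (Bc D 14 + Cc D 14) + 70 * (Bc D 16 + Cc D 16) + 15 * (Bc D 18 + Cc D 18) + 1 * (Bc D 20 + Cc D 20)) = 16777216 * 10626"
  using U_eq[OF ne, of 4, unfolded sumBC[OF ne]] by (simp add: binomial_eq_0 sumBC[OF ne] Bc0[OF ne] Cc0[OF ne] Bc24[OF ne] gU1_def gU2_def bsuc)

lemma U5: assumes ne: "near_extremal_24 D"
  shows "1024 * (42504 + 4368 * (Bc D 8 + Cc D 8) + 2002 * (Bc D 10 + Cc D 10) + 792 * (Bc D 12 + Cc D 12) + 252 * (Bc D 14 + Cc D 14) + 56 * (Bc D 16 + Cc D 16) + 6 * (Bc D 18 + Cc D 18)) = 16777216 * 42504"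
  using U_eq[OF ne, of 5, unfolded sumBC[OF ne]] by (simp add: binomial_eq_0 sumBC[OF ne] Bc0[OF ne] Cc0[OF ne] Bc24[OF ne] gU1_def gU2_def bsuc)

lemma U6: assumes ne: "near_extremal_24 D"
  shows "4096 * (134596 + 8008 * (Bc D 8 + Cc D 8) + 3003 * (Bc D 10 + Cc D 10) + 924 * (Bc D 12 + Cc D 12) + 210 * (Bc D 14 + Cc D 14) + 28 * (Bc D 16 + Cc D 16) + 1 * (Bc D 18 + Cc D 18)) = 16777216 * 134596"
  using U_eq[OF ne, of 6, unfolded sumBC[OF ne]] by (simp add: binomial_eq_0 sumBC[OF ne] Bc0[OF ne] Cc0[OF ne] Bc24[OF ne] gU1_def gU2_def bsuc)

lemma U7: assumes ne: "near_extremal_24 D"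
  shows "16384 * (346104 + 11440 * (Bc D 8 + Cc D 8) + 3432 * (Bc D 10 + Cc D 10) + 792 * (Bc D 12 + Cc D 12) + 120 * (Bc D 14 + Cc D 14) + 8 * (Bc D 16 + Cc D 16)) = 16777216 * 346104"
  using U_eq[OF ne, of 7, unfolded sumBC[OF ne]] by (simp add: binomial_eq_0 sumBC[OF ne] Bc0[OF ne] Cc0[OF ne] Bc24[OF ne] gU1_def gU2_def bsuc)


lemma Pn0: assumes ne: "near_extremal_24 D" shows "1 * Bc D 8 + 1 * Bc D 10 + 1 * Bc D 12 + 1 * Bc D 14 + 1 * Bc D 16 + 1 * Bc D 18 + 1 * Bc D 20 + 1 * Bc D 22 = 4194303"
  using P0[OF ne] by simp

lemma Pn1: assumes ne: "near_extremal_24 D" shows "15 * Bc D 8 + 13 * Bc D 10 + 11 * Bc D 12 + 9 * Bc D 14 + 7 * Bc D 16 + 5 * Bc D 18 + 3 * Bc D 20 + 1 * Bc D 22 = 24117225"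
  using P1[OF ne] by simp

lemma Pn2: assumes ne: "near_extremal_24 D" shows "105 * Bc D 8 + 78 * Bc D 10 + 55 * Bc D 12 + 36 * Bc D 14 + 21 * Bc D 16 + 10 * Bc D 18 + 3 * Bc D 20 = 66322179"
  using P2[OF ne] by simp

lemma Pn3: assumes ne: "near_extremal_24 D" shows "455 * Bc D 8 + 286 * Bc D 10 + 165 * Bc D 12 + 84 * Bc D 14 + 35 * Bc D 16 + 10 * Bc D 18 + 1 * Bc D 20 = 116062485"
  using P3[OF ne] by simp

lemma Pn4: assumes ne: "near_extremal_24 D" shows "1365 * Bc D 8 + 715 * Bc D 10 + 330 * Bc D 12 + 126 * Bc D 14 + 35 * Bc D 16 + 5 * Bc D 18 = 145071465"
  using P4[OF ne] by simp

lemma Pn5: assumes ne: "near_extremal_24 D" shows "3003 * Bc D 8 + 1287 * Bc D 10 + 462 * Bc D 12 + 126 * Bc D 14 + 21 * Bc D 16 + 1 * Bc D 18 = 137792655"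
  using P5[OF ne] by simp

lemma Pn6: assumes ne: "near_extremal_24 D" shows "5005 * Bc D 8 + 1716 * Bc D 10 + 462 * Bc D 12 + 84 * Bc D 14 + 7 * Bc D 16 = 103268781"
  using P6[OF ne] by simp

lemma Pn7: assumes ne: "near_extremal_24 D" shows "6435 * Bc D 8 + 1716 * Bc D 10 + 330 * Bc D 12 + 36 * Bc D 14 + 1 * Bc D 16 = 62515035 + 256 * Cc D 8"
  using P7[OF ne] by simp

lemma Un0: assumes ne: "near_extremal_24 D" shows "1 * Bc D 8 + 1 * Cc D 8 + 1 * Bc D 10 + 1 * Cc D 10 + 1 * Bc D 12 + 1 * Cc D 12 + 1 * Bc D 14 + 1 * Cc D 14 + 1 * Bc D 16 + 1 * Cc D 16 + 1 * Bc D 18 + 1 * Cc D 18 + 1 * Bc D 20 + 1 * Cc D 20 + 1 * Bc D 22 + 1 * Cc D 22 + 1 * Bc D 24 + 1 * Cc D 24 = 16777215"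
  using U0[OF ne] by simp

lemma Un1: assumes ne: "near_extremal_24 D" shows "16 * Bc D 8 + 16 * Cc D 8 + 14 * Bc D 10 + 14 * Cc D 10 + 12 * Bc D 12 + 12 * Cc D 12 + 10 * Bc D 14 + 10 * Cc D 14 + 8 * Bc D 16 + 8 * Cc D 16 + 6 * Bc D 18 + 6 * Cc D 18 + 4 * Bc D 20 + 4 * Cc D 20 + 2 * Bc D 22 + 2 * Cc D 22 = 100663272"
  using U1[OF ne] by simp

lemma Un2: assumes ne: "near_extremal_24 D" shows "120 * Bc D 8 + 120 * Cc D 8 + 91 * Bc D 10 + 91 * Cc D 10 + 66 * Bc D 12 + 66 * Cc D 12 + 45 * Bc D 14 + 45 * Cc D 14 + 28 * Bc D 16 + 28 * Cc D 16 + 15 * Bc D 18 + 15 * Cc D 18 + 6 * Bc D 20 + 6 * Cc D 20 + 1 * Bc D 22 + 1 * Cc D 22 = 289406700"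
  using U2[OF ne] by simp

lemma Un3: assumes ne: "near_extremal_24 D" shows "560 * Bc D 8 + 560 * Cc D 8 + 364 * Bc D 10 + 364 * Cc D 10 + 220 * Bc D 12 + 220 * Cc D 12 + 120 * Bc D 14 + 120 * Cc D 14 + 56 * Bc D 16 + 56 * Cc D 16 + 20 * Bc D 18 + 20 * Cc D 18 + 4 * Bc D 20 + 4 * Cc D 20 = 530577432"
  using U3[OF ne] by simp

lemma Un4: assumes ne: "near_extremal_24 D" shows "1820 * Bc D 8 + 1820 * Cc D 8 + 1001 * Bc D 10 + 1001 * Cc D 10 + 495 * Bc D 12 + 495 * Cc D 12 + 210 * Bc D 14 + 210 * Cc D 14 + 70 * Bc D 16 + 70 * Cc D 16 + 15 * Bc D 18 + 15 * Cc D 18 + 1 * Bc D 20 + 1 * Cc D 20 = 696374910"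
  using U4[OF ne] by simp

lemma Un5: assumes ne: "near_extremal_24 D" shows "4368 * Bc D 8 + 4368 * Cc D 8 + 2002 * Bc D 10 + 2002 * Cc D 10 + 792 * Bc D 12 + 792 * Cc D 12 + 252 * Bc D 14 + 252 * Cc D 14 + 56 * Bc D 16 + 56 * Cc D 16 + 6 * Bc D 18 + 6 * Cc D 18 = 696343032"
  using U5[OF ne] by simp

lemma Un6: assumes ne: "near_extremal_24 D" shows "8008 * Bc D 8 + 8008 * Cc D 8 + 3003 * Bc D 10 + 3003 * Cc D 10 + 924 * Bc D 12 + 924 * Cc D 12 + 210 * Bc D 14 + 210 * Cc D 14 + 28 * Bc D 16 + 28 * Cc D 16 + 1 * Bc D 18 + 1 * Cc D 18 = 551170620"
  using U6[OF ne] by simp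

lemma Un7: assumes ne: "near_extremal_24 D" shows "11440 * Bc D 8 + 11440 * Cc D 8 + 3432 * Bc D 10 + 3432 * Cc D 10 + 792 * Bc D 12 + 792 * Cc D 12 + 120 * Bc D 14 + 120 * Cc D 14 + 8 * Bc D 16 + 8 * Cc D 16 = 354064392"
  using U7[OF ne] by simp

lemma key1: assumes ne: "near_extremal_24 D" shows "Bc D 8 = 2 * Cc D 8"
  using Pn0[OF ne] Pn1[OF ne] Pn2[OF ne] Pn3[OF ne] Pn4[OF ne] Pn5[OF ne] Pn6[OF ne] Pn7[OF ne] by linarith

lemma key2: assumes ne: "near_extremal_24 D" shows "Bc D 10 + Cc D 10 + 8 * (Bc D 8 + Cc D 8) = 18216"
proof -
  have h: "33 * (16 * Bc D 8 + 16 * Cc D 8 + 14 * Bc D 10 + 14 * Cc D 10 + 12 * Bc D 12 + 12 * Cc D 12 + 10 * Bc D 14 + 10 * Cc D 14 + 8 * Bc D 16 + 8 * Cc D 16 + 6 * Bc D 18 + 6 * Cc D 18 + 4 * Bc D 20 + 4 * Cc D 20 + 2 * Bc D 22 + 2 * Cc D 22) + 90 * (560 * Bc D 8 + 560 * Cc D 8 + 364 * Bc D 10 + 364 * Cc D 10 + 220 * Bc D 12 + 220 * Cc D 12 + 120 * Bc D 14 + 120 * Cc D 14 + 56 * Bc D 16 + 56 * Cc D 16 + 20 * Bc D 18 + 20 * Cc D 18 + 4 * Bc D 20 + 4 * Cc D 20) + 80 * (4368 * Bc D 8 + 4368 * Cc D 8 + 2002 * Bc D 10 + 2002 * Cc D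 10 + 792 * Bc D 12 + 792 * Cc D 12 + 252 * Bc D 14 + 252 * Cc D 14 + 56 * Bc D 16 + 56 * Cc D 16 + 6 * Bc D 18 + 6 * Cc D 18) + 16 * (11440 * Bc D 8 + 11440 * Cc D 8 + 3432 * Bc D 10 + 3432 * Cc D 10 + 792 * Bc D 12 + 792 * Cc D 12 + 120 * Bc D 14 + 120 * Cc D 14 + 8 * Bc D 16 + 8 * Cc D 16) + 66 * 289406700 + 96 * 696374910 + 48 * 551170620 = 33 * 100663272 + 90 * 530577432 + 80 * 696343032 + 16 * 354064392 + 66 * (120 * Bc D 8 + 120 * Cc D 8 + 91 * Bc D 10 + 91 * Cc D 10 + 66 * Bc D 12 + 66 * Cc D 12 + 45 * Bc D 14 + 45 * Cc D 14 + 28 * Bc D 16 + 28 * Cc D 16 + 15 * Bc D 18 + 15 * Cc D 18 + 6 * Bc D 20 + 6 * Cc D 20 + 1 * Bc D 22 + 1 * Cc D 22) + 96 * (1820 * Bc D 8 + 1820 * Cc D 8 + 1001 * Bc D 10 + 1001 * Cc D 10 + 495 * Bc D 12 + 495 * Cc D 12 + 210 * Bc D 14 + 210 * Cc D 14 + 70 * Bc D 16 + 70 * Cc D 16 + 15 * Bc D 18 + 15 * Cc D 18 + 1 * Bc D 20 + 1 * Cc D 20) + 48 * (8008 * Bc D 8 + 8008 * Cc D 8 + 3003 * Bc D 10 + 3003 * Cc D 10 + 924 * Bc D 12 + 924 * Cc D 12 + 210 * Bc D 14 + 210 * Cc D 14 + 28 * Bc D 16 + 28 * Cc D 16 + 1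 * Bc D 18 + 1 * Cc D 18)"
    by (simp only: Un1[OF ne] Un2[OF ne] Un3[OF ne] Un4[OF ne] Un5[OF ne] Un6[OF ne] Un7[OF ne])
  have h2: "2048 * (Bc D 10 + Cc D 10 + 8 * (Bc D 8 + Cc D 8)) = 2048 * 18216"
    using h by (simp add: algebra_simps)
  then show ?thesis by simp
qed

lemma wt_smult: "c \<noteq> 0 \<Longrightarrow> wt n (vsmult c x) = wt n x"
  by (simp add: wt_def)

lemma f4_nonzero: "(c::f4) \<noteq> 0 \<Longrightarrow> c \<in> {1, Fw, Fw2}"
  by (cases c) simp_all

lemma card3: "card {1::f4, Fw, Fw2} = 3"
  by (simp del: F1_eq add: one_f4_def)

lemma Cc8_3: assumes ne: "near_extremal_24 D"
  shows "Cc D 8 = 3 * card {x\<in>D. wt 24 x = 8 \<and> x 0 = 1}"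
proof -
  let ?Y = "{x\<in>D. wt 24 x = 8 \<and> x 0 = 1}"
  let ?X = "{x\<in>D. wt 24 x = 8 \<and> x 0 \<noteq> 0}"
  let ?U = "{1::f4, Fw, Fw2}"
  have U0: "c \<noteq> 0" if "c \<in> ?U" for c
    using that by (auto simp del: F1_eq F0_eq simp: one_f4_def zero_f4_def)
  have "bij_betw (\<lambda>(c, y). vsmult c y) (?U \<times> ?Y) ?X"
  proof (rule bij_betwI[where g = "\<lambda>x. (x 0, vsmult (inverse (x 0)) x)"])
    show "(\<lambda>(c, y). vsmult c y) \<in> ?U \<times> ?Y \<rightarrow> ?X"
    proof
      fix p assume p: "p \<in> ?U \<times> ?Y"
      obtain c y where cy: "p = (c, y)" "c \<in> ?U" "y \<in> ?Y" using p by auto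
      have c0: "c \<noteq> 0" using U0 cy(2) by blast
      show "(\<lambda>(c, y). vsmult c y) p \<in> ?X"
        using cy c0 ne_Dsm[OF ne] by (simp add: wt_smult)
    qed
    show "(\<lambda>x. (x 0, vsmult (inverse (x 0)) x)) \<in> ?X \<rightarrow> ?U \<times> ?Y"
    proof
      fix x assume x: "x \<in> ?X"
      then have x0: "x 0 \<noteq> 0" by simp
      have "x 0 \<in> ?U" using f4_nonzero[OF x0] .
      moreover have "vsmult (inverse (x 0)) x \<in> ?Y"
        using x x0 ne_Dsm[OF ne] by (simp add: wt_smult)
      ultimately show "(x 0, vsmult (inverse (x 0)) x) \<in> ?U \<times> ?Y" by simp
    qed
    show "(\<lambda>x. (x 0, vsmult (inverse (x 0)) x)) ((\<lambda>(c, y). vsmult c y) p) = p" if p: "p \<in> ?U \<times> ?Y" for p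
    proof -
      obtain c y where cy: "p = (c, y)" "c \<in> ?U" "y \<in> ?Y" using p by auto
      have c0: "c \<noteq> 0" using U0 cy(2) by blast
      have "vsmult (inverse c) (vsmult c y) = y" using c0 by (simp add: fun_eq_iff)
      then show ?thesis using cy by simp
    qed
    show "(\<lambda>(c, y). vsmult c y) ((\<lambda>x. (x 0, vsmult (inverse (x 0)) x)) x) = x" if x: "x \<in> ?X" for x
      using x by (simp add: fun_eq_iff)
  qed
  then have "card (?U \<times> ?Y) = card ?X" by (rule bij_betw_same_card)
  then show ?thesis by (simp add: Cc_def card_cartesian_product card3)
qed

theorem fact5p1:
  assumes "near_extremal_24 D"
  shows "\<exists>\<beta>::int. int (card {x \<in> D. wt 24 x = 8}) = 9 * \<beta> \<and> 1 \<le> \<beta> \<and> \<beta> \<le> 253"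
proof -
  note ne = assms
  have fin: "finite D" by (rule ne_finite[OF ne])
  define \<beta> where "\<beta> = card {x\<in>D. wt 24 x = 8 \<and> x 0 = 1}"
  have split: "card {x \<in> D. wt 24 x = 8} = Bc D 8 + Cc D 8"
  proof -
    have u: "{x \<in> D. wt 24 x = 8} = {x\<in>D. wt 24 x = 8 \<and> x 0 = 0} \<union> {x\<in>D. wt 24 x = 8 \<and> x 0 \<noteq> 0}" by auto
    show ?thesis unfolding Bc_def Cc_def
      by (subst u, rule card_Un_disjoint) (use fin in auto)
  qed
  have a: "card {x \<in> D. wt 24 x = 8} = 9 * \<beta>"
    using split key1[OF ne] Cc8_3[OF ne] by (simp add: \<beta>_def)
  have b0: "8 * (Bc D 8 + Cc D 8) \<le> 18216"
    using key2[OF ne] by (metis le_add2)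
  have b: "8 * card {x \<in> D. wt 24 x = 8} \<le> 18216"
    using split b0 by simp
  have c: "card {x \<in> D. wt 24 x = 8} \<ge> 1"
  proof -
    obtain x where "x \<in> D" "wt 24 x = 8" using ne_ex[OF ne] by blast
    then have "{x \<in> D. wt 24 x = 8} \<noteq> {}" by blast
    moreover have "finite {x \<in> D. wt 24 x = 8}" using fin by simp
    ultimately show ?thesis by (simp add: Suc_le_eq card_gt_0_iff)
  qed
  have b1: "1 \<le> \<beta>" using a c by linarith
  have b2: "\<beta> \<le> 253" using a b by linarith
  show ?thesis
  proof (intro exI[of _ "int \<beta>"] conjI)
    show "int (card {x \<in> D. wt 24 x = 8}) = 9 * int \<beta>" using a by simp
    show "1 \<le> int \<beta>" using b1 by simp
    show "int \<beta> \<le> 253" using b2 by simp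
  qed
qed
end
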